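(* Let $\vec{\alpha}=\langle \alpha_s : s\in[\mathbb{N}]^{<\infty}\rangle$ be a sequence of nonstandard hypernatural numbers. For every $\mathcal{X}\subseteq[\mathbb{N}]^{\infty}$ and every $\vec{\alpha}$-tree $T$ there exists an $\vec{\alpha}$-tree $S\subseteq T$ with $st(S)=st(T)$ such that one of the following holds: (1) $[S]\subseteq\mathcal{X}$; (2) $[S]\cap\mathcal{X}=\emptyset$; (3) for every $\vec{\alpha}$-tree $S'$ with $S'\subseteq S$, both $[S']\not\subseteq\mathcal{X}$ and $[S']\cap\mathcal{X}\neq\emptyset$.
   Context: Setting (Alpha-Theory of Benci–Di Nasso): one works in ZFC together with a new symbol $\alpha$ satisfying: ($\alpha$1) every sequence $\varphi=\langle\varphi_i:i\in\mathbb{N}\rangle$ has a unique "ideal value" $\varphi[\alpha]$; ($\alpha$2) if $\varphi[\alpha]=\psi[\alpha]$ and $f$ is a function such that $f\circ\varphi$ and $f\circ\psi$ make sense, then $(f\circ\varphi)[\alpha]=(f\circ\psi)[\alpha]$; ($\alpha$3) for $r\in\mathbb{R}$ the constant sequence with value $r$ has ideal value $r$, and the sequence $\psi_i=i$ has ideal value $\alpha\notin\mathbb{N}$; ($\alpha$4) if $\vartheta_i=\{\varphi_i,\psi_i\}$ for all $i$ then $\vartheta[\alpha]=\{\varphi[\alpha],\psi[\alpha]\}$; ($\alpha$5) the constant sequence $\emptyset$ has ideal value $\emptyset$, and if every $\psi_i$ is a nonempty set then $\psi[\alpha]=\{\vartheta[\alpha]:\vartheta_i\in\psi_i\text{ for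 all }i\}$. For a set $A$, ${}^*A$ denotes the ideal value of the constant sequence with value $A$; relations and operations are transformed the same way and the $*$ is dropped on them (e.g. $<$, $\cup$). ${}^*\mathbb{N}$ is the set of hypernatural numbers; elements of ${}^*\mathbb{N}\setminus\mathbb{N}$ are nonstandard hypernatural numbers. Notation: $[X]^{<\infty}$, $[X]^{\infty}$ are the finite, resp. infinite, subsets of $X\subseteq\mathbb{N}$. For finite $s$ and $X\subseteq\mathbb{N}$, $s\sqsubseteq X$ means $s=\{j\in X:j\le i\}$ for some $i\in\mathbb{N}$. A tree on $\mathbb{N}$ is a nonempty $T\subseteq[\mathbb{N}]^{<\infty}$ such that $s\sqsubseteq t\in T$ implies $s\in T$. $[T]=\{X\in[\mathbb{N}]^\infty:$ every finite $s\sqsubseteq X$ lies in $T\}$. The stem $st(T)$ of $T$, if it exists, is the $\sqsubseteq$-maximal $s\in T$ which is $\sqsubseteq$-comparable with every element of $T$; $T/s=\{t\in T:s\sqsubseteq t\}$. An $\vec{\alpha}$-tree is a tree $T$ on $\mathbb{N}$ with a stem $st(T)$ such that $T/st(T)\neq\emptyset$ and for all $s\in T/st(T)$, $s\cup\{\alpha_s\}\in{}^*T$. *)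

theory Defs
  imports Main
begin

text \<open>Alpha-Theory is modelled by an ultrapower of the sequences over a
nonprincipal ultrafilter U on the natural numbers, namely
U = the family of A with alpha in *A.  The ideal value of a sequence phi is its
U-class.  A hypernatural number is the ideal value of a sequence nat to nat.\<close>

definition free_ultrafilter :: "nat set set \<Rightarrow> bool" where
  "free_ultrafilter U \<longleftrightarrow>
     UNIV \<in> U \<and> {} \<notin> U \<and>
     (\<forall>A B. A \<in> U \<and> B \<in> U \<longrightarrow> A \<inter> B \<in> U) \<and>
     (\<forall>A B. A \<in> U \<and> A \<subseteq> B \<longrightarrow> B \<in> U) \<and>
     (\<forall>A. A \<in> U \<or> - A \<in> U) \<and>
     (\<forall>A. finite A \<longrightarrow> A \<notin> U)"

definition nonstandard :: "nat set set \<Rightarrow> (nat \<Rightarrow> nat) \<Rightarrow> bool" where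
  "nonstandard U f \<longleftrightarrow> (\<forall>n. {i. f i \<noteq> n} \<in> U)"

text \<open>s together with the hypernatural (class of f) belongs to *T.\<close>
definition ext_in_star :: "nat set set \<Rightarrow> nat set \<Rightarrow> (nat \<Rightarrow> nat) \<Rightarrow> nat set set \<Rightarrow> bool" where
  "ext_in_star U s f T \<longleftrightarrow> {i. insert (f i) s \<in> T} \<in> U"

definition init_seg :: "nat set \<Rightarrow> nat set \<Rightarrow> bool" (infix "\<sqsubseteq>" 50) where
  "s \<sqsubseteq> X \<longleftrightarrow> finite s \<and> s \<subseteq> X \<and> (\<forall>j\<in>X. \<forall>k\<in>s. j \<le> k \<longrightarrow> j \<in> s)"

definition is_tree :: "nat set set \<Rightarrow> bool" where
  "is_tree T \<longleftrightarrow> T \<noteq> {} \<and> (\<forall>t\<in>T. finite t) \<and> (\<forall>s t. s \<sqsubseteq> t \<and> t \<in> T \<longrightarrow> s \<in> T)"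

definition body :: "nat set set \<Rightarrow> nat set set" where
  "body T = {X. infinite X \<and> (\<forall>s. s \<sqsubseteq> X \<longrightarrow> s \<in> T)}"

definition comparable_all :: "nat set set \<Rightarrow> nat set \<Rightarrow> bool" where
  "comparable_all T s \<longleftrightarrow> (\<forall>t\<in>T. s \<sqsubseteq> t \<or> t \<sqsubseteq> s)"

definition is_stem :: "nat set set \<Rightarrow> nat set \<Rightarrow> bool" where
  "is_stem T s \<longleftrightarrow> s \<in> T \<and> comparable_all T s \<and>
     (\<forall>s'\<in>T. comparable_all T s' \<and> s \<sqsubseteq> s' \<longrightarrow> s' = s)"

definition stem :: "nat set set \<Rightarrow> nat set" where
  "stem T = (THE s. is_stem T s)"

definition restr :: "nat set set \<Rightarrow> nat set \<Rightarrow> nat set set" where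
  "restr T s = {t\<in>T. s \<sqsubseteq> t}"

text \<open>alpha-tree, for the vector alpha_s given by representing sequences a s.\<close>
definition alpha_tree :: "nat set set \<Rightarrow> (nat set \<Rightarrow> nat \<Rightarrow> nat) \<Rightarrow> nat set set \<Rightarrow> bool" where
  "alpha_tree U a T \<longleftrightarrow> is_tree T \<and> (\<exists>s. is_stem T s) \<and> restr T (stem T) \<noteq> {} \<and>
     (\<forall>s\<in>restr T (stem T). ext_in_star U s (a s) T)"

end

theory Submission
  imports Defs
begin

lemma seg_refl: "finite s \<Longrightarrow> s \<sqsubseteq> s"
  by (auto simp: init_seg_def)

lemma seg_finite: "s \<sqsubseteq> X \<Longrightarrow> finite s"
  by (auto simp: init_seg_def)

lemma seg_subset: "s \<sqsubseteq> X \<Longrightarrow> s \<subseteq> X"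
  by (auto simp: init_seg_def)

lemma seg_trans: "s \<sqsubseteq> t \<Longrightarrow> t \<sqsubseteq> X \<Longrightarrow> s \<sqsubseteq> X"
  unfolding init_seg_def by blast

lemma seg_antisym: "s \<sqsubseteq> t \<Longrightarrow> t \<sqsubseteq> s \<Longrightarrow> s = t"
  unfolding init_seg_def by blast

lemma seg_comparable: "u \<sqsubseteq> X \<Longrightarrow> v \<sqsubseteq> X \<Longrightarrow> u \<sqsubseteq> v \<or> v \<sqsubseteq> u"
proof -
  assume u: "u \<sqsubseteq> X" and v: "v \<sqsubseteq> X"
  have "u \<subseteq> v \<or> v \<subseteq> u"
  proof (rule ccontr)
    assume "\<not> (u \<subseteq> v \<or> v \<subseteq> u)"
    then obtain x y where x: "x \<in> u" "x \<notin> v" and y: "y \<in> v" "y \<notin> u" by blast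
    show False
    proof (cases "x \<le> y")
      case True thus False using u v x y unfolding init_seg_def by blast
    next
      case False
      then have "y \<le> x" by simp
      thus False using u v x y unfolding init_seg_def by blast
    qed
  qed
  thus ?thesis using u v unfolding init_seg_def by blast
qed

lemma seg_insert: "finite s \<Longrightarrow> \<forall>k\<in>s. k < n \<Longrightarrow> s \<sqsubseteq> insert n s"
  unfolding init_seg_def by auto

lemma seg_of_insert:
  assumes "u \<sqsubseteq> insert n s" "finite s" "\<forall>k\<in>s. k < n"
  shows "u \<sqsubseteq> s \<or> u = insert n s"
proof (cases "n \<in> u")
  case True
  have "insert n s \<subseteq> u"
  proof
    fix x assume "x \<in> insert n s"
    then show "x \<in> u" using True assms unfolding init_seg_def
      by (metis insertE less_imp_le)
  qed
  then show ?thesis using assms(1) unfolding init_seg_def by auto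
next
  case False
  then have "u \<subseteq> s" using assms unfolding init_seg_def by auto
  then show ?thesis using assms(1) unfolding init_seg_def by auto
qed

lemma seg_card: "u \<sqsubseteq> w \<Longrightarrow> finite w \<Longrightarrow> card u \<le> card w"
  by (simp add: card_mono seg_subset)

lemma seg_eq_card: "u \<sqsubseteq> w \<Longrightarrow> finite w \<Longrightarrow> card w \<le> card u \<Longrightarrow> u = w"
  by (meson card_seteq seg_subset)

lemma stem_unique:
  assumes "is_stem T s" shows "stem T = s"
proof -
  have "\<And>s'. is_stem T s' \<Longrightarrow> s' = s"
  proof -
    fix s' assume s': "is_stem T s'"
    have "s \<sqsubseteq> s' \<or> s' \<sqsubseteq> s" using assms s' unfolding is_stem_def comparable_all_def by blast
    thus "s' = s" using assms s' unfolding is_stem_def by blast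
  qed
  then show ?thesis unfolding stem_def using assms by (rule the_equality[rotated])
qed

lemma alpha_is_stem: "alpha_tree U a T \<Longrightarrow> is_stem T (stem T)"
  unfolding alpha_tree_def using stem_unique by metis

lemma uf_mono: "free_ultrafilter U \<Longrightarrow> A \<in> U \<Longrightarrow> A \<subseteq> B \<Longrightarrow> B \<in> U"
  unfolding free_ultrafilter_def by (elim conjE allE[of _ A] allE[of _ B]) (erule mp, rule conjI)
lemma uf_int: "free_ultrafilter U \<Longrightarrow> A \<in> U \<Longrightarrow> B \<in> U \<Longrightarrow> A \<inter> B \<in> U"
  unfolding free_ultrafilter_def by (elim conjE allE[of _ A] allE[of _ B]) (erule mp, rule conjI)
lemma uf_empty: "free_ultrafilter U \<Longrightarrow> {} \<notin> U"
  unfolding free_ultrafilter_def by (elim conjE)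
lemma uf_compl: "free_ultrafilter U \<Longrightarrow> A \<notin> U \<Longrightarrow> -A \<in> U"
  unfolding free_ultrafilter_def by (elim conjE allE[of _ A]) (erule disjE, simp)
lemma uf_ne: "free_ultrafilter U \<Longrightarrow> A \<in> U \<Longrightarrow> \<exists>i. i \<in> A"
  using uf_empty by (metis ex_in_conv)
lemma uf_un: "free_ultrafilter U \<Longrightarrow> A \<union> B \<in> U \<Longrightarrow> A \<in> U \<or> B \<in> U"
proof (rule ccontr)
  assume u: "free_ultrafilter U" "A \<union> B \<in> U" "\<not> (A \<in> U \<or> B \<in> U)"
  then have "-A \<in> U" "-B \<in> U" using uf_compl by blast+
  then have "(A \<union> B) \<inter> (-A \<inter> -B) \<in> U" using u uf_int by blast
  moreover have "(A \<union> B) \<inter> (-A \<inter> -B) = {}" by blast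
  ultimately show False using u(1) uf_empty by simp
qed

lemma ns_finite:
  assumes "free_ultrafilter U" "nonstandard U f" "finite F"
  shows "{i. f i \<notin> F} \<in> U"
  using assms(3)
proof (induction F rule: finite_induct)
  case empty
  have "UNIV \<in> U" using assms(1) unfolding free_ultrafilter_def by (elim conjE)
  then show ?case by simp
next
  case (insert x F)
  have "{i. f i \<notin> F} \<inter> {i. f i \<noteq> x} \<in> U"
    using insert assms uf_int unfolding nonstandard_def by blast
  moreover have "{i. f i \<notin> F} \<inter> {i. f i \<noteq> x} = {i. f i \<notin> insert x F}" by auto
  ultimately show ?case by simp
qed

lemma ns_bound:
  assumes "free_ultrafilter U" "nonstandard U f" "finite t"
  shows "{i. \<forall>k\<in>t. k < f i} \<in> U"
proof -
  obtain m where m: "t \<subseteq> {..<m}" using assms(3) by (auto simp: finite_nat_set_iff_bounded)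
  have "{i. f i \<notin> {..<m}} \<in> U" using ns_finite assms by blast
  moreover have "{i. f i \<notin> {..<m}} \<subseteq> {i. \<forall>k\<in>t. k < f i}" using m by force
  ultimately show ?thesis using uf_mono[OF assms(1)] by blast
qed

lemma branching:
  assumes fin: "\<forall>u\<in>T. finite u" and s: "s \<in> T" "comparable_all T s"
    and n: "insert n s \<in> T" "\<forall>k\<in>s. k < n" and m: "insert m s \<in> T" "\<forall>k\<in>s. k < m"
    and nm: "n \<noteq> m"
  shows "is_stem T s"
  unfolding is_stem_def
proof (intro conjI ballI impI)
  show "s \<in> T" "comparable_all T s" using s by auto
  fix s' assume s': "s' \<in> T" "comparable_all T s' \<and> s \<sqsubseteq> s'"
  have fs: "finite s" using fin s by blast
  have fs': "finite s'" using fin s' by blast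
  show "s' = s"
  proof (rule ccontr)
    assume ne: "s' \<noteq> s"
    have key: "insert x s \<sqsubseteq> s'" if "insert x s \<in> T" "\<forall>k\<in>s. k < x" for x
    proof -
      have "s' \<sqsubseteq> insert x s \<or> insert x s \<sqsubseteq> s'" using s' that unfolding comparable_all_def by blast
      moreover have "s' \<sqsubseteq> insert x s \<Longrightarrow> s' = insert x s"
        using seg_of_insert[of s' x s] fs that s' ne seg_antisym by blast
      ultimately show ?thesis using seg_refl fs' by auto
    qed
    have "insert n s \<sqsubseteq> insert m s \<or> insert m s \<sqsubseteq> insert n s"
      using seg_comparable key n m by blast
    then have "insert n s = insert m s"
      using seg_of_insert fs n m by (metis insertI1 less_irrefl seg_subset subsetD)
    then show False using nm n m by (metis insertE insertI1 less_irrefl)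
  qed
qed


definition goodP :: "nat set set \<Rightarrow> (nat set \<Rightarrow> nat \<Rightarrow> nat) \<Rightarrow> nat set set \<Rightarrow> nat set set \<Rightarrow> nat set \<Rightarrow> bool" where
  "goodP U a T Y u \<longleftrightarrow> (\<exists>W. alpha_tree U a W \<and> W \<subseteq> T \<and> stem W = u \<and> body W \<subseteq> Y)"

lemma long_seg:
  assumes "infinite X" shows "\<exists>v. v \<sqsubseteq> X \<and> card v \<ge> k"
proof -
  obtain F where F: "F \<subseteq> X" "finite F" "card F = Suc k"
    using infinite_arbitrarily_large[OF assms] by blast
  then have Fne: "F \<noteq> {}" by auto
  define v where "v = {j\<in>X. j \<le> Max F}"
  have fv: "finite v" unfolding v_def by (rule finite_subset[of _ "{..Max F}"]) auto
  have "F \<subseteq> v" using F Fne unfolding v_def by auto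
  then have "card v \<ge> Suc k" using F fv card_mono by metis
  moreover have "v \<sqsubseteq> X" using fv unfolding v_def init_seg_def by auto
  ultimately show ?thesis by (intro exI[of _ v]) auto
qed

lemma amalg:
  assumes uf: "free_ultrafilter U" and ns: "\<And>s. finite s \<Longrightarrow> nonstandard U (a s)"
    and tr: "is_tree T" and tT: "t \<in> T"
    and large: "{i. goodP U a T Y (insert (a t i) t)} \<in> U"
  shows "goodP U a T Y t"
proof -
  have ft: "finite t" using tr tT unfolding is_tree_def by blast
  define N where "N = {n. (\<forall>k\<in>t. k<n) \<and> goodP U a T Y (insert n t)}"
  define W where "W n = (SOME W. alpha_tree U a W \<and> W \<subseteq> T \<and> stem W = insert n t \<and> body W \<subseteq> Y)" for n
  have W: "alpha_tree U a (W n) \<and> W n \<subseteq> T \<and> stem (W n) = insert n t \<and> body (W n) \<subseteq> Y" if "n \<in> N" for n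
  proof -
    have "\<exists>W. alpha_tree U a W \<and> W \<subseteq> T \<and> stem W = insert n t \<and> body W \<subseteq> Y"
      using that unfolding N_def goodP_def by blast
    then show ?thesis unfolding W_def by (rule someI_ex)
  qed
  have Wtree: "is_tree (W n)" if "n \<in> N" for n using W[OF that] unfolding alpha_tree_def by blast
  have Wstem: "is_stem (W n) (insert n t)" if "n \<in> N" for n using W[OF that] alpha_is_stem by metis
  have nbig: "\<forall>k\<in>t. k<n" if "n \<in> N" for n using that unfolding N_def by blast
  have NU: "{i. a t i \<in> N} \<in> U"
  proof -
    have "{i. \<forall>k\<in>t. k < a t i} \<inter> {i. goodP U a T Y (insert (a t i) t)} \<in> U"
      using uf_int[OF uf ns_bound[OF uf ns[OF ft] ft] large] .
    then show ?thesis by (rule uf_mono[OF uf]) (auto simp: N_def)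
  qed
  have Wcomp: "u \<sqsubseteq> t \<or> insert n t \<sqsubseteq> u" if "n \<in> N" "u \<in> W n" for n u
  proof -
    have "u \<sqsubseteq> insert n t \<or> insert n t \<sqsubseteq> u" using Wstem[OF that(1)] that(2)
      unfolding is_stem_def comparable_all_def by blast
    then show ?thesis using seg_of_insert[OF _ ft nbig[OF that(1)]] by blast
  qed
  define S where "S = {u. u \<sqsubseteq> t} \<union> (\<Union>n\<in>N. W n)"
  have ST: "S \<subseteq> T"
  proof
    fix u assume "u \<in> S"
    then show "u \<in> T" unfolding S_def using tr tT W unfolding is_tree_def by blast
  qed
  have fS: "\<forall>u\<in>S. finite u" using ST tr unfolding is_tree_def by blast
  have tS: "t \<in> S" unfolding S_def using seg_refl[OF ft] by blast
  have trS: "is_tree S" unfolding is_tree_def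
  proof (intro conjI allI impI)
    show "S \<noteq> {}" using tS by blast
    show "\<forall>t\<in>S. finite t" using fS .
    fix v u assume vu: "v \<sqsubseteq> u \<and> u \<in> S"
    then show "v \<in> S"
    proof (cases "u \<sqsubseteq> t")
      case True then show ?thesis using vu seg_trans unfolding S_def by blast
    next
      case False
      then obtain n where "n \<in> N" "u \<in> W n" using vu unfolding S_def by blast
      then show ?thesis using Wtree vu unfolding S_def is_tree_def by blast
    qed
  qed
  have insS: "insert n t \<in> S" if "n \<in> N" for n
    using Wstem[OF that] that unfolding S_def is_stem_def by blast
  have compS: "comparable_all S t" unfolding comparable_all_def
  proof
    fix u assume "u \<in> S"
    then show "t \<sqsubseteq> u \<or> u \<sqsubseteq> t" unfolding S_def
      using Wcomp seg_trans seg_insert[OF ft] nbig by blast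
  qed
  obtain i0 where i0: "a t i0 \<in> N" using uf_ne[OF uf NU] by blast
  have "{i. a t i \<in> N} \<inter> {i. a t i \<noteq> a t i0} \<in> U"
    using uf_int[OF uf NU] ns[OF ft] unfolding nonstandard_def by blast
  then obtain i1 where i1: "a t i1 \<in> N" "a t i1 \<noteq> a t i0" using uf_ne[OF uf] by blast
  have stemS: "is_stem S t"
    by (rule branching[OF fS tS compS insS[OF i0] nbig[OF i0] insS[OF i1(1)] nbig[OF i1(1)]])
      (use i1 in auto)
  have stS: "stem S = t" using stem_unique[OF stemS] .
  have alphaS: "alpha_tree U a S" unfolding alpha_tree_def stS
  proof (intro conjI ballI)
    show "is_tree S" using trS .
    show "\<exists>s. is_stem S s" using stemS by blast
    show "restr S t \<noteq> {}" using tS seg_refl[OF ft] unfolding restr_def by blast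
    fix s assume s: "s \<in> restr S t"
    then have sS: "s \<in> S" and ts: "t \<sqsubseteq> s" unfolding restr_def by auto
    show "ext_in_star U s (a s) S"
    proof (cases "s \<sqsubseteq> t")
      case True
      then have "s = t" using ts seg_antisym by blast
      have "{i. a t i \<in> N} \<subseteq> {i. insert (a t i) t \<in> S}" using insS by blast
      then show ?thesis unfolding ext_in_star_def \<open>s = t\<close> by (rule uf_mono[OF uf NU])
    next
      case False
      then obtain n where n: "n \<in> N" "s \<in> W n" using sS unfolding S_def by blast
      then have "insert n t \<sqsubseteq> s" using Wcomp False by blast
      then have "s \<in> restr (W n) (stem (W n))" using n W unfolding restr_def by auto
      then have "ext_in_star U s (a s) (W n)" using W[OF n(1)] unfolding alpha_tree_def by blast
      then show ?thesis unfolding ext_in_star_def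
        by (rule uf_mono[OF uf]) (use n in \<open>auto simp: S_def\<close>)
    qed
  qed
  have bodyS: "body S \<subseteq> Y"
  proof
    fix X assume X: "X \<in> body S"
    then have infX: "infinite X" and segs: "\<And>s. s \<sqsubseteq> X \<Longrightarrow> s \<in> S" unfolding body_def by auto
    obtain v where v: "v \<sqsubseteq> X" "card v \<ge> Suc (card t)" using long_seg[OF infX] by blast
    have vS: "v \<in> S" using segs v by blast
    have notle: "\<not> w \<sqsubseteq> t" if "card w \<ge> Suc (card t)" for w
      using seg_card[OF _ ft] that by fastforce
    obtain n where n: "n \<in> N" "v \<in> W n" using vS notle[OF v(2)] unfolding S_def by blast
    have nv: "insert n t \<sqsubseteq> v" using Wcomp[OF n] notle[OF v(2)] by blast
    have cardins: "card (insert m t) = Suc (card t)" if "m \<in> N" for m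
      using nbig[OF that] ft by auto
    have "X \<in> body (W n)" unfolding body_def
    proof (intro CollectI conjI allI impI)
      show "infinite X" using infX .
      fix w assume w: "w \<sqsubseteq> X"
      have "w \<sqsubseteq> v \<or> v \<sqsubseteq> w" using seg_comparable[OF w v(1)] .
      then show "w \<in> W n"
      proof
        assume "w \<sqsubseteq> v" then show ?thesis using Wtree[OF n(1)] n(2) unfolding is_tree_def by blast
      next
        assume vw: "v \<sqsubseteq> w"
        have fw: "finite w" using w seg_finite by blast
        have cw: "card w \<ge> Suc (card t)" using seg_card[OF vw fw] v(2) by linarith
        obtain m where m: "m \<in> N" "w \<in> W m" using segs[OF w] notle[OF cw] unfolding S_def by blast
        have mw: "insert m t \<sqsubseteq> w" using Wcomp[OF m] notle[OF cw] by blast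
        have nw: "insert n t \<sqsubseteq> w" using seg_trans[OF nv vw] .
        have "insert n t \<sqsubseteq> insert m t \<or> insert m t \<sqsubseteq> insert n t" using seg_comparable[OF nw mw] .
        then have "insert n t = insert m t"
          using seg_eq_card cardins[OF n(1)] cardins[OF m(1)] ft by (metis finite_insert order_refl)
        then have "n = m" using nbig[OF n(1)] nbig[OF m(1)] by (metis insertE insertI1 less_irrefl)
        then show ?thesis using m by simp
      qed
    qed
    then show "X \<in> Y" using W[OF n(1)] by blast
  qed
  show ?thesis unfolding goodP_def using alphaS ST stS bodyS by blast
qed


theorem mainTheorem1:
  fixes U :: "nat set set" and a :: "nat set \<Rightarrow> nat \<Rightarrow> nat"
    and \<X> :: "nat set set" and T :: "nat set set"
  assumes "free_ultrafilter U"
    and "\<And>s. finite s \<Longrightarrow> nonstandard U (a s)"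
    and "\<X> \<subseteq> {X. infinite X}"
    and "alpha_tree U a T"
  shows "\<exists>S. alpha_tree U a S \<and> S \<subseteq> T \<and> stem S = stem T \<and>
           (body S \<subseteq> \<X> \<or> body S \<inter> \<X> = {} \<or>
            (\<forall>S'. alpha_tree U a S' \<and> S' \<subseteq> S \<longrightarrow>
                  \<not> body S' \<subseteq> \<X> \<and> body S' \<inter> \<X> \<noteq> {}))"
proof -
  note uf = assms(1) and ns = assms(2) and aT = assms(4)
  define st where "st = stem T"
  have trT: "is_tree T" using aT unfolding alpha_tree_def by blast
  have stT: "is_stem T st" using alpha_is_stem[OF aT] unfolding st_def .
  have stinT: "st \<in> T" using stT unfolding is_stem_def by blast
  have fT: "\<forall>u\<in>T. finite u" using trT unfolding is_tree_def by blast
  have fst: "finite st" using fT stinT by blast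
  have compT: "st \<sqsubseteq> u \<or> u \<sqsubseteq> st" if "u \<in> T" for u
    using stT that unfolding is_stem_def comparable_all_def by blast
  define G where "G u \<longleftrightarrow> \<not> goodP U a T \<X> u \<and> \<not> goodP U a T (-\<X>) u" for u
  show ?thesis
  proof (cases "G st")
    case False
    then consider "goodP U a T \<X> st" | "goodP U a T (-\<X>) st" unfolding G_def by blast
    then show ?thesis
    proof cases
      case 1
      then obtain W where "alpha_tree U a W" "W \<subseteq> T" "stem W = st" "body W \<subseteq> \<X>"
        unfolding goodP_def by blast
      then show ?thesis using st_def by blast
    next
      case 2
      then obtain W where W: "alpha_tree U a W" "W \<subseteq> T" "stem W = st" and "body W \<subseteq> -\<X>"
        unfolding goodP_def by blast
      then have "body W \<inter> \<X> = {}" by blast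
      then show ?thesis using W st_def by blast
    qed
  next
    case True
    note Gst = True
    have propag: "{i. G (insert (a t i) t)} \<in> U" if tG: "t \<in> T" "G t" for t
    proof (rule ccontr)
      define A where "A = {i. goodP U a T \<X> (insert (a t i) t)}"
      define B where "B = {i. goodP U a T (-\<X>) (insert (a t i) t)}"
      assume "{i. G (insert (a t i) t)} \<notin> U"
      then have c: "- {i. G (insert (a t i) t)} \<in> U" by (rule uf_compl[OF uf])
      have eq: "- {i. G (insert (a t i) t)} = A \<union> B"
        unfolding G_def A_def B_def by blast
      have "A \<in> U \<or> B \<in> U" using c unfolding eq by (rule uf_un[OF uf])
      then have "goodP U a T \<X> t \<or> goodP U a T (-\<X>) t"
      proof
        assume "A \<in> U" then show ?thesis unfolding A_def using amalg[OF uf ns trT tG(1)] by simp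
      next
        assume "B \<in> U" then show ?thesis unfolding B_def using amalg[OF uf ns trT tG(1)] by simp
      qed
      then show False using tG(2) unfolding G_def by simp
    qed
    define S where "S = {t\<in>T. t \<sqsubseteq> st \<or> (st \<sqsubseteq> t \<and> (\<forall>u. st \<sqsubseteq> u \<and> u \<sqsubseteq> t \<longrightarrow> G u))}"
    have ST: "S \<subseteq> T" unfolding S_def by blast
    have fS: "\<forall>u\<in>S. finite u" using ST fT by blast
    have Gall: "G u" if "t \<in> S" "st \<sqsubseteq> u" "u \<sqsubseteq> t" for t u
    proof -
      have "t \<sqsubseteq> st \<or> (\<forall>u. st \<sqsubseteq> u \<and> u \<sqsubseteq> t \<longrightarrow> G u)" using that(1) unfolding S_def by blast
      then show ?thesis
      proof
        assume "t \<sqsubseteq> st"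
        then have "u \<sqsubseteq> st" using seg_trans[OF that(3)] by simp
        then have "u = st" using seg_antisym that(2) by simp
        then show ?thesis using Gst by simp
      qed (use that in blast)
    qed
    have stS: "st \<in> S" unfolding S_def using stinT seg_refl[OF fst] by blast
    have key: "{i. insert (a t i) t \<in> S \<and> (\<forall>k\<in>t. k < a t i)} \<in> U" if "t \<in> S" "st \<sqsubseteq> t" for t
    proof -
      have tT: "t \<in> T" and ft: "finite t" using that ST fS by auto
      have "t \<in> restr T (stem T)" using tT that unfolding restr_def st_def by blast
      then have e: "{i. insert (a t i) t \<in> T} \<in> U" using aT unfolding alpha_tree_def ext_in_star_def by blast
      have Gt: "G t" using Gall[OF that(1) that(2) seg_refl[OF ft]] .
      have "{i. insert (a t i) t \<in> T} \<inter> ({i. G (insert (a t i) t)} \<inter> {i. \<forall>k\<in>t. k < a t i}) \<in> U"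
        using uf_int[OF uf e uf_int[OF uf propag[OF tT Gt] ns_bound[OF uf ns[OF ft] ft]]] .
      then show ?thesis
      proof (rule uf_mono[OF uf], intro subsetI CollectI conjI)
        fix i assume i: "i \<in> {i. insert (a t i) t \<in> T} \<inter> ({i. G (insert (a t i) t)} \<inter> {i. \<forall>k\<in>t. k < a t i})"
        then have big: "\<forall>k\<in>t. k < a t i" by blast
        then show "\<forall>k\<in>t. k < a t i" .
        have sti: "st \<sqsubseteq> insert (a t i) t" using seg_trans[OF that(2) seg_insert[OF ft big]] .
        have "G u" if "st \<sqsubseteq> u" "u \<sqsubseteq> insert (a t i) t" for u
          using seg_of_insert[OF that(2) ft big] Gall[OF \<open>t \<in> S\<close> that(1)] i by blast
        then show "insert (a t i) t \<in> S" unfolding S_def using i sti by blast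
      qed
    qed
    have trS: "is_tree S" unfolding is_tree_def
    proof (intro conjI allI impI)
      show "S \<noteq> {}" using stS by blast
      show "\<forall>t\<in>S. finite t" using fS .
      fix s t assume st': "s \<sqsubseteq> t \<and> t \<in> S"
      then have sT: "s \<in> T" using ST trT unfolding is_tree_def by blast
      have "t \<sqsubseteq> st \<or> (st \<sqsubseteq> t \<and> (\<forall>u. st \<sqsubseteq> u \<and> u \<sqsubseteq> t \<longrightarrow> G u))" using st' unfolding S_def by blast
      then show "s \<in> S"
      proof
        assume "t \<sqsubseteq> st"
        then have "s \<sqsubseteq> st" using seg_trans st' by blast
        then show ?thesis using sT unfolding S_def by blast
      next
        assume h: "st \<sqsubseteq> t \<and> (\<forall>u. st \<sqsubseteq> u \<and> u \<sqsubseteq> t \<longrightarrow> G u)"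
        have "s \<sqsubseteq> st \<or> st \<sqsubseteq> s" using seg_comparable[of s t st] st' h by blast
        then show ?thesis
        proof
          assume "s \<sqsubseteq> st" then show ?thesis using sT unfolding S_def by blast
        next
          assume sts: "st \<sqsubseteq> s"
          have "G u" if "st \<sqsubseteq> u" "u \<sqsubseteq> s" for u
          proof -
            have "u \<sqsubseteq> t" using seg_trans[OF that(2)] st' by blast
            then show ?thesis using h that(1) by blast
          qed
          then show ?thesis using sT sts unfolding S_def by blast
        qed
      qed
    qed
    have compS: "comparable_all S st" unfolding comparable_all_def using compT ST by blast
    have kst: "{i. insert (a st i) st \<in> S \<and> (\<forall>k\<in>st. k < a st i)} \<in> U"
      using key[OF stS seg_refl[OF fst]] .
    obtain i0 where i0: "insert (a st i0) st \<in> S" "\<forall>k\<in>st. k < a st i0" using uf_ne[OF uf kst] by blast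
    have "{i. insert (a st i) st \<in> S \<and> (\<forall>k\<in>st. k < a st i)} \<inter> {i. a st i \<noteq> a st i0} \<in> U"
      using uf_int[OF uf kst] ns[OF fst] unfolding nonstandard_def by blast
    then obtain i1 where i1: "insert (a st i1) st \<in> S" "\<forall>k\<in>st. k < a st i1" "a st i1 \<noteq> a st i0"
      using uf_ne[OF uf] by blast
    have stemS: "is_stem S st"
      by (rule branching[OF fS stS compS i0 i1(1,2)]) (use i1 in auto)
    have stemS': "stem S = st" using stem_unique[OF stemS] .
    have alphaS: "alpha_tree U a S" unfolding alpha_tree_def stemS'
    proof (intro conjI ballI)
      show "is_tree S" using trS .
      show "\<exists>s. is_stem S s" using stemS by blast
      show "restr S st \<noteq> {}" using stS seg_refl[OF fst] unfolding restr_def by blast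
      fix s assume "s \<in> restr S st"
      then have sS: "s \<in> S" "st \<sqsubseteq> s" unfolding restr_def by auto
      have "{i. insert (a s i) s \<in> S \<and> (\<forall>k\<in>s. k < a s i)} \<subseteq> {i. insert (a s i) s \<in> S}" by blast
      then show "ext_in_star U s (a s) S" unfolding ext_in_star_def
        by (rule uf_mono[OF uf key[OF sS]])
    qed
    have third: "\<not> body S' \<subseteq> \<X> \<and> body S' \<inter> \<X> \<noteq> {}" if S': "alpha_tree U a S'" "S' \<subseteq> S" for S'
    proof -
      define s' where "s' = stem S'"
      have stS': "is_stem S' s'" using alpha_is_stem[OF S'(1)] unfolding s'_def .
      have s'S': "s' \<in> S'" using stS' unfolding is_stem_def by blast
      have s'S: "s' \<in> S" using s'S' S' by blast
      have fs': "finite s'" using fS s'S by blast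
      have sts': "st \<sqsubseteq> s'"
      proof (rule ccontr)
        assume nle: "\<not> st \<sqsubseteq> s'"
        then have s'st: "s' \<sqsubseteq> st" using compT s'S ST by blast
        have "s' \<in> restr S' (stem S')" using s'S' seg_refl[OF fs'] unfolding restr_def s'_def by blast
        then have e: "{i. insert (a s' i) s' \<in> S'} \<in> U"
          using S'(1) unfolding alpha_tree_def ext_in_star_def s'_def by blast
        have "{i. insert (a s' i) s' \<in> S'} \<inter> ({i. \<forall>k\<in>s'. k < a s' i} \<inter> {i. a s' i \<notin> st}) \<in> U"
          using uf_int[OF uf e uf_int[OF uf ns_bound[OF uf ns[OF fs'] fs'] ns_finite[OF uf ns[OF fs'] fst]]] .
        then obtain i where i: "insert (a s' i) s' \<in> S'" "\<forall>k\<in>s'. k < a s' i" "a s' i \<notin> st"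
          using uf_ne[OF uf] by blast
        have "insert (a s' i) s' \<in> T" using i(1) S'(2) ST by blast
        then have "st \<sqsubseteq> insert (a s' i) s' \<or> insert (a s' i) s' \<sqsubseteq> st" using compT by blast
        then show False
        proof
          assume "st \<sqsubseteq> insert (a s' i) s'"
          then have "st \<sqsubseteq> s' \<or> st = insert (a s' i) s'" using seg_of_insert fs' i(2) by blast
          then show False using nle i(3) by blast
        next
          assume "insert (a s' i) s' \<sqsubseteq> st"
          then show False using i(3) seg_subset by blast
        qed
      qed
      have Gs': "G s'" using Gall[OF s'S sts' seg_refl[OF fs']] .
      show ?thesis
      proof
        show "\<not> body S' \<subseteq> \<X>"
        proof
          assume "body S' \<subseteq> \<X>"
          then have "goodP U a T \<X> s'" unfolding goodP_def s'_def using S' ST by blast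
          then show False using Gs' unfolding G_def by blast
        qed
        show "body S' \<inter> \<X> \<noteq> {}"
        proof
          assume "body S' \<inter> \<X> = {}"
          then have "body S' \<subseteq> -\<X>" by blast
          then have "goodP U a T (-\<X>) s'" unfolding goodP_def s'_def using S' ST by blast
          then show False using Gs' unfolding G_def by blast
        qed
      qed
    qed
    show ?thesis unfolding st_def[symmetric] using alphaS ST stemS' third by blast
  qed
qed


end
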